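(* Let $\mathfrak a$ be an abelian ideal of $\mathfrak b$ and suppose $\gamma_1,\gamma_2\in\Delta_{\mathfrak a}$ are strongly orthogonal. (i) If $\gamma_1+\delta\in\Delta^+$ for some $\delta\in\Delta^+$, then $\gamma_2+\delta\notin\Delta^+$. (ii) If $\gamma_1-\delta\in\Delta_{\mathfrak a}$ for some $\delta\in\Delta^+$, then $\gamma_2-\delta\notin\Delta_{\mathfrak a}$.
   Context: Let $G$ be a connected simple algebraic group over an algebraically closed field of characteristic zero, $B$ a Borel subgroup, $T\subset B$ a maximal torus, $\mathfrak b=\mathrm{Lie}(B)$, $\Delta$ the root system of $(G,T)$, $\Delta^+$ the positive roots determined by $B$. An abelian ideal of $\mathfrak b$ is a subspace $\mathfrak a\subset\mathfrak b$ with $[\mathfrak b,\mathfrak a]\subset\mathfrak a$, $[\mathfrak a,\mathfrak a]=0$; it is the sum of the root spaces for the roots in a subset $\Delta_{\mathfrak a}\subset\Delta^+$. Two distinct roots $\gamma_1,\gamma_2$ are strongly orthogonal if neither $\gamma_1+\gamma_2$ nor $\gamma_1-\gamma_2$ is a root. *)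

theory Defs
  imports "HOL-Analysis.Analysis"
begin

definition root_system :: "'a::euclidean_space set \<Rightarrow> bool" where
  "root_system R \<longleftrightarrow> finite R \<and> 0 \<notin> R \<and> span R = UNIV \<and>
     (\<forall>\<alpha>\<in>R. \<forall>\<beta>\<in>R. \<beta> - (2 * (\<beta> \<bullet> \<alpha>) / (\<alpha> \<bullet> \<alpha>)) *\<^sub>R \<alpha> \<in> R
                   \<and> 2 * (\<beta> \<bullet> \<alpha>) / (\<alpha> \<bullet> \<alpha>) \<in> \<int>) \<and>
     (\<forall>\<alpha>\<in>R. \<forall>c::real. c *\<^sub>R \<alpha> \<in> R \<longrightarrow> c = 1 \<or> c = -1)"

definition irreducible_root_system :: "'a::euclidean_space set \<Rightarrow> bool" where
  "irreducible_root_system R \<longleftrightarrow> root_system R \<and>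
     (\<forall>R1 R2. R1 \<union> R2 = R \<and> R1 \<inter> R2 = {} \<and> (\<forall>a\<in>R1. \<forall>b\<in>R2. a \<bullet> b = 0)
        \<longrightarrow> R1 = {} \<or> R2 = {})"

text \<open>Positive system: the roots positive on some regular vector (equivalently, determined by a Borel).\<close>
definition positive_system :: "'a::euclidean_space set \<Rightarrow> 'a set \<Rightarrow> bool" where
  "positive_system R P \<longleftrightarrow> (\<exists>v. (\<forall>\<alpha>\<in>R. v \<bullet> \<alpha> \<noteq> 0) \<and> P = {\<alpha>\<in>R. v \<bullet> \<alpha> > 0})"

text \<open>The set of roots \<Delta>_a of an abelian ideal a of b: a sum of positive root spaces,
  stable under ad of b (upward closed) and abelian.\<close>
definition abelian_ideal_roots :: "'a::euclidean_space set \<Rightarrow> 'a set \<Rightarrow> 'a set \<Rightarrow> bool" where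
  "abelian_ideal_roots R P A \<longleftrightarrow> A \<subseteq> P \<and>
     (\<forall>\<alpha>\<in>A. \<forall>\<beta>\<in>P. \<alpha> + \<beta> \<in> R \<longrightarrow> \<alpha> + \<beta> \<in> A) \<and>
     (\<forall>\<alpha>\<in>A. \<forall>\<beta>\<in>A. \<alpha> + \<beta> \<notin> R)"

definition strongly_orthogonal :: "'a::euclidean_space set \<Rightarrow> 'a \<Rightarrow> 'a \<Rightarrow> bool" where
  "strongly_orthogonal R \<gamma>1 \<gamma>2 \<longleftrightarrow> \<gamma>1 \<noteq> \<gamma>2 \<and> \<gamma>1 + \<gamma>2 \<notin> R \<and> \<gamma>1 - \<gamma>2 \<notin> R"

end

theory Submission
  imports Defs
begin

lemma rs_neg:
  assumes "root_system R" "b \<in> R" shows "- b \<in> R"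
proof -
  have "b \<noteq> 0" using assms unfolding root_system_def by auto
  hence bb: "b \<bullet> b \<noteq> 0" by simp
  have "b - (2 * (b \<bullet> b) / (b \<bullet> b)) *\<^sub>R b \<in> R" using assms unfolding root_system_def by blast
  moreover have "b - (2 * (b \<bullet> b) / (b \<bullet> b)) *\<^sub>R b = - b" using bb by (simp add: algebra_simps scaleR_2)
  ultimately show ?thesis by simp
qed

lemma rs_diff:
  assumes rs: "root_system R" and a: "a \<in> R" and b: "b \<in> R"
    and pos: "a \<bullet> b > 0" and ne: "a \<noteq> b"
  shows "a - b \<in> R"
proof -
  have a0: "a \<noteq> 0" and b0: "b \<noteq> 0" using rs a b unfolding root_system_def by auto
  have aa: "a \<bullet> a > 0" and bb: "b \<bullet> b > 0" using a0 b0 by auto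
  define c where "c = (a \<bullet> b) / (b \<bullet> b)"
  have cpos: "c > 0" using pos bb by (simp add: c_def)
  have wne: "a - c *\<^sub>R b \<noteq> 0"
  proof
    assume "a - c *\<^sub>R b = 0"
    hence ac: "a = c *\<^sub>R b" by simp
    hence "c *\<^sub>R b \<in> R" using a by simp
    hence "c = 1 \<or> c = -1" using rs b unfolding root_system_def by blast
    hence "c = 1" using cpos by auto
    thus False using ac ne by simp
  qed
  hence "(a - c *\<^sub>R b) \<bullet> (a - c *\<^sub>R b) > 0" by simp
  also have "(a - c *\<^sub>R b) \<bullet> (a - c *\<^sub>R b) = a \<bullet> a - 2 * c * (a \<bullet> b) + c * c * (b \<bullet> b)"
    by (simp add: algebra_simps inner_commute)
  also have "\<dots> = a \<bullet> a - (a \<bullet> b) * (a \<bullet> b) / (b \<bullet> b)"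
    using bb by (simp add: c_def field_simps)
  finally have cs: "(a \<bullet> b) * (a \<bullet> b) < (a \<bullet> a) * (b \<bullet> b)"
    using bb by (simp add: field_simps)
  define n where "n = 2 * (a \<bullet> b) / (b \<bullet> b)"
  define m where "m = 2 * (b \<bullet> a) / (a \<bullet> a)"
  have nZ: "n \<in> \<int>" using rs a b unfolding root_system_def n_def by blast
  have mZ: "m \<in> \<int>" using rs a b unfolding root_system_def m_def by blast
  have npos: "n > 0" using pos bb by (simp add: n_def)
  have mpos: "m > 0" using pos aa by (simp add: m_def inner_commute)
  have "n * m = 4 * ((a \<bullet> b) * (a \<bullet> b)) / ((a \<bullet> a) * (b \<bullet> b))"
    by (simp add: n_def m_def inner_commute field_simps)
  also have "\<dots> < 4" using cs aa bb by (simp add: field_simps)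
  finally have nm: "n * m < 4" .
  obtain i where i: "n = of_int i" using nZ Ints_cases by blast
  obtain j where j: "m = of_int j" using mZ Ints_cases by blast
  have "i > 0" "j > 0" using npos mpos i j by auto
  moreover have "i * j < 4" using nm i j by (metis of_int_less_iff of_int_mult of_int_numeral)
  ultimately have "i = 1 \<or> j = 1"
  proof (cases "i = 1 \<or> j = 1")
    case False
    hence "i \<ge> 2" "j \<ge> 2" using \<open>i > 0\<close> \<open>j > 0\<close> by auto
    hence "i * j \<ge> 2 * 2" by (intro mult_mono) auto
    thus ?thesis using \<open>i * j < 4\<close> by simp
  qed simp
  thus ?thesis
  proof
    assume "i = 1"
    hence "n = 1" using i by simp
    moreover have "a - n *\<^sub>R b \<in> R" using rs a b unfolding root_system_def n_def by blast
    ultimately show ?thesis by simp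
  next
    assume "j = 1"
    hence "m = 1" using j by simp
    moreover have "b - m *\<^sub>R a \<in> R" using rs a b unfolding root_system_def m_def by blast
    ultimately have "b - a \<in> R" by simp
    from rs_neg[OF rs this] show ?thesis by simp
  qed
qed

lemma rs_sum:
  assumes rs: "root_system R" and a: "a \<in> R" and b: "b \<in> R"
    and neg: "a \<bullet> b < 0" and ne: "a \<noteq> - b"
  shows "a + b \<in> R"
  using rs_diff[OF rs a rs_neg[OF rs b]] neg ne by simp

theorem lemma1p3:
  fixes R P A :: "'a::euclidean_space set" and \<gamma>1 \<gamma>2 :: 'a
  assumes "irreducible_root_system R"
    and "positive_system R P"
    and "abelian_ideal_roots R P A"
    and "\<gamma>1 \<in> A" and "\<gamma>2 \<in> A"
    and "strongly_orthogonal R \<gamma>1 \<gamma>2"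
  shows "(\<forall>\<delta>\<in>P. \<gamma>1 + \<delta> \<in> P \<longrightarrow> \<gamma>2 + \<delta> \<notin> P)
       \<and> (\<forall>\<delta>\<in>P. \<gamma>1 - \<delta> \<in> A \<longrightarrow> \<gamma>2 - \<delta> \<notin> A)"
proof -
  have rs: "root_system R" using assms(1) unfolding irreducible_root_system_def by blast
  obtain v where v: "\<forall>\<alpha>\<in>R. v \<bullet> \<alpha> \<noteq> 0" and Pd: "P = {\<alpha>\<in>R. v \<bullet> \<alpha> > 0}"
    using assms(2) unfolding positive_system_def by blast
  have AP: "A \<subseteq> P" and up: "\<forall>\<alpha>\<in>A. \<forall>\<beta>\<in>P. \<alpha> + \<beta> \<in> R \<longrightarrow> \<alpha> + \<beta> \<in> A"
    and ab: "\<forall>\<alpha>\<in>A. \<forall>\<beta>\<in>A. \<alpha> + \<beta> \<notin> R"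
    using assms(3) unfolding abelian_ideal_roots_def by auto
  have nopp: "x \<noteq> - y" if "x \<in> P" "y \<in> P" for x y
  proof
    assume "x = - y" thus False using that Pd by (auto simp: inner_minus_right)
  qed
  have geA: "x \<bullet> y \<ge> 0" if "x \<in> A" "y \<in> A" for x y
  proof (rule ccontr)
    assume "\<not> x \<bullet> y \<ge> 0"
    moreover have "x \<in> R" "y \<in> R" "x \<in> P" "y \<in> P" using that AP Pd by auto
    ultimately have "x + y \<in> R" using rs_sum[OF rs] nopp[of x y] by simp
    thus False using ab that by blast
  qed
  have g1: "\<gamma>1 \<in> R" "\<gamma>1 \<in> P" and g2: "\<gamma>2 \<in> R" "\<gamma>2 \<in> P" using assms(4,5) AP Pd by auto
  have so: "\<gamma>1 \<noteq> \<gamma>2" "\<gamma>1 + \<gamma>2 \<notin> R" "\<gamma>1 - \<gamma>2 \<notin> R"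
    using assms(6) unfolding strongly_orthogonal_def by auto
  have orth: "\<gamma>1 \<bullet> \<gamma>2 = 0"
  proof -
    have "\<not> \<gamma>1 \<bullet> \<gamma>2 < 0" using rs_sum[OF rs g1(1) g2(1)] so nopp g1 g2 by blast
    moreover have "\<not> \<gamma>1 \<bullet> \<gamma>2 > 0" using rs_diff[OF rs g1(1) g2(1)] so by blast
    ultimately show ?thesis by simp
  qed
  have dpos: "d \<bullet> d > 0" if "d \<in> P" for d
  proof -
    have "d \<noteq> 0" using that Pd rs unfolding root_system_def by auto
    thus ?thesis by simp
  qed
  show ?thesis
  proof (intro conjI ballI impI notI)
    fix d assume d: "d \<in> P" and s1: "\<gamma>1 + d \<in> P" and s2: "\<gamma>2 + d \<in> P"
    have A1: "\<gamma>1 + d \<in> A" using up assms(4) d s1 Pd by blast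
    have A2: "\<gamma>2 + d \<in> A" using up assms(5) d s2 Pd by blast
    have "(\<gamma>1 + d) \<bullet> \<gamma>2 \<ge> 0" using geA[OF A1 assms(5)] .
    hence e1: "d \<bullet> \<gamma>2 \<ge> 0" using orth by (simp add: inner_add_left)
    have "(\<gamma>2 + d) \<bullet> \<gamma>1 \<ge> 0" using geA[OF A2 assms(4)] .
    hence e2: "d \<bullet> \<gamma>1 \<ge> 0" using orth by (simp add: inner_add_left inner_add_right inner_commute)
    have "(\<gamma>1 + d) \<bullet> (\<gamma>2 + d) = \<gamma>1 \<bullet> \<gamma>2 + d \<bullet> \<gamma>1 + d \<bullet> \<gamma>2 + d \<bullet> d"
      by (simp add: algebra_simps inner_commute)
    hence "(\<gamma>1 + d) \<bullet> (\<gamma>2 + d) > 0" using orth e1 e2 dpos[OF d] by linarith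
    moreover have "\<gamma>1 + d \<noteq> \<gamma>2 + d" using so by simp
    ultimately have "(\<gamma>1 + d) - (\<gamma>2 + d) \<in> R" using rs_diff[OF rs] s1 s2 Pd by blast
    thus False using so by simp
  next
    fix d assume d: "d \<in> P" and s1: "\<gamma>1 - d \<in> A" and s2: "\<gamma>2 - d \<in> A"
    have "(\<gamma>1 - d) \<bullet> \<gamma>2 \<ge> 0" using geA[OF s1 assms(5)] .
    hence e1: "d \<bullet> \<gamma>2 \<le> 0" using orth by (simp add: inner_diff_left)
    have "(\<gamma>2 - d) \<bullet> \<gamma>1 \<ge> 0" using geA[OF s2 assms(4)] .
    hence e2: "d \<bullet> \<gamma>1 \<le> 0" using orth by (simp add: inner_diff_left inner_diff_right inner_commute)
    have "(\<gamma>1 - d) \<bullet> (\<gamma>2 - d) = \<gamma>1 \<bullet> \<gamma>2 - d \<bullet> \<gamma>1 - d \<bullet> \<gamma>2 + d \<bullet> d"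
      by (simp add: algebra_simps inner_commute)
    hence "(\<gamma>1 - d) \<bullet> (\<gamma>2 - d) > 0" using orth e1 e2 dpos[OF d] by linarith
    moreover have "\<gamma>1 - d \<noteq> \<gamma>2 - d" using so by simp
    ultimately have "(\<gamma>1 - d) - (\<gamma>2 - d) \<in> R" using rs_diff[OF rs] s1 s2 AP Pd by blast
    thus False using so by simp
  qed
qed

end
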